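(* Let $(G,c)$ be a $k$-terminal network with terminal set $Q$, where $G$ is a connected plane graph and $c$ is such that any two distinct subsets of $E(G)$ have distinct total costs. Let $G^*$ be the planar dual of $G$. For $S\subset Q$ ($S\ne\emptyset,Q$) let $E_S$ be the (unique) cutset of the minimum-cost $S$-separating cut in $G$, and $E_S^*=\{e^*:e\in E_S\}$. Then for all such $S,T\subset Q$, the subgraph $G^*[E_S^*\cup E_T^*]$ of $G^*$ (consisting of the edges $E_S^*\cup E_T^*$ and their endpoints) has at most $6k$ vertices of degree greater than $2$.
   Context: The dual $G^*$ of a connected plane (multi-)graph $G$ has a vertex $v^*_f$ for each face $f$ of $G$, and for each edge $e\in E(G)$ lying on the boundary of faces $f_1,f_2$ a dual edge $e^*=(v^*_{f_1},v^*_{f_2})$ with cost $c(e^* )=c(e)$ ($G^*$ may have loops and parallel edges; a loop contributes 2 to the degree). For $S\subset Q$, $\bar S=Q\setminus S$; a cut $(W,V(G)\setminus W)$ is $S$-separating if $W\cap Q\in\{S,\bar S\}$; its cutset is the set of edges with exactly one endpoint in $W$, and its cost is the total cost of these edges. Edge costs are positive reals. *)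

theory Defs
  imports Complex_Main "HOL-Combinatorics.Permutations"
begin

text \<open>Plane multigraphs as combinatorial maps (rotation systems).
  Edges are the elements of a finite set E; each edge e has two darts (e,True), (e,False).
  A rotation sigma (a permutation of the darts) gives the cyclic order of darts around
  each vertex; vertices are the sigma-orbits, faces are the orbits of phi = sigma o alpha,
  where alpha swaps the two darts of an edge. A connected map is plane (genus 0)
  iff V - E + F = 2.\<close>

definition darts :: "'e set \<Rightarrow> ('e \<times> bool) set" where
  "darts E = E \<times> (UNIV :: bool set)"

definition alpha :: "'e \<times> bool \<Rightarrow> 'e \<times> bool" where
  "alpha d = (fst d, \<not> snd d)"

definition orb :: "('a \<Rightarrow> 'a) \<Rightarrow> 'a \<Rightarrow> 'a set" where
  "orb f x = range (\<lambda>n. (f ^^ n) x)"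

definition phi :: "('e \<times> bool \<Rightarrow> 'e \<times> bool) \<Rightarrow> 'e \<times> bool \<Rightarrow> 'e \<times> bool" where
  "phi \<sigma> = \<sigma> \<circ> alpha"

definition verts :: "'e set \<Rightarrow> ('e \<times> bool \<Rightarrow> 'e \<times> bool) \<Rightarrow> ('e \<times> bool) set set" where
  "verts E \<sigma> = (\<lambda>d. orb \<sigma> d) ` darts E"

definition faces :: "'e set \<Rightarrow> ('e \<times> bool \<Rightarrow> 'e \<times> bool) \<Rightarrow> ('e \<times> bool) set set" where
  "faces E \<sigma> = (\<lambda>d. orb (phi \<sigma>) d) ` darts E"

definition adj :: "'e set \<Rightarrow> ('e \<times> bool \<Rightarrow> 'e \<times> bool) \<Rightarrow> (('e \<times> bool) set \<times> ('e \<times> bool) set) set" where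
  "adj E \<sigma> = {(orb \<sigma> (e, b), orb \<sigma> (e, \<not> b)) | e b. e \<in> E}"

definition connected_map :: "'e set \<Rightarrow> ('e \<times> bool \<Rightarrow> 'e \<times> bool) \<Rightarrow> bool" where
  "connected_map E \<sigma> = (\<forall>u \<in> verts E \<sigma>. \<forall>v \<in> verts E \<sigma>. (u, v) \<in> (adj E \<sigma>)\<^sup>*)"

definition connected_plane_map :: "'e set \<Rightarrow> ('e \<times> bool \<Rightarrow> 'e \<times> bool) \<Rightarrow> bool" where
  "connected_plane_map E \<sigma> =
     (finite E \<and> \<sigma> permutes darts E \<and> connected_map E \<sigma> \<and>
      int (card (verts E \<sigma>)) - int (card E) + int (card (faces E \<sigma>)) = 2)"

definition cutset :: "'e set \<Rightarrow> ('e \<times> bool \<Rightarrow> 'e \<times> bool) \<Rightarrow> ('e \<times> bool) set set \<Rightarrow> 'e set" where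
  "cutset E \<sigma> W = {e \<in> E. (orb \<sigma> (e, True) \<in> W) \<noteq> (orb \<sigma> (e, False) \<in> W)}"

definition S_separating ::
  "'e set \<Rightarrow> ('e \<times> bool \<Rightarrow> 'e \<times> bool) \<Rightarrow> ('e \<times> bool) set set \<Rightarrow> ('e \<times> bool) set set \<Rightarrow> ('e \<times> bool) set set \<Rightarrow> bool" where
  "S_separating E \<sigma> Q S W = (W \<subseteq> verts E \<sigma> \<and> (W \<inter> Q = S \<or> W \<inter> Q = Q - S))"

definition min_S_cut ::
  "'e set \<Rightarrow> ('e \<times> bool \<Rightarrow> 'e \<times> bool) \<Rightarrow> ('e \<Rightarrow> real) \<Rightarrow> ('e \<times> bool) set set \<Rightarrow> ('e \<times> bool) set set \<Rightarrow> ('e \<times> bool) set set \<Rightarrow> bool" where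
  "min_S_cut E \<sigma> c Q S W = (S_separating E \<sigma> Q S W \<and>
     (\<forall>W'. S_separating E \<sigma> Q S W' \<longrightarrow> sum c (cutset E \<sigma> W) \<le> sum c (cutset E \<sigma> W')))"

text \<open>Degree of the dual vertex (face) f in the subgraph G*[X*]: number of darts of edges in X
  lying on face f (the dual edge e* joins the faces of (e,True) and (e,False); a loop counts 2).\<close>
definition dual_deg :: "'e set \<Rightarrow> ('e \<times> bool \<Rightarrow> 'e \<times> bool) \<Rightarrow> 'e set \<Rightarrow> ('e \<times> bool) set \<Rightarrow> nat" where
  "dual_deg E \<sigma> X f = card {d \<in> darts E. fst d \<in> X \<and> orb (phi \<sigma>) d = f}"

end

theory Submission
  imports Defs
begin


definition eqv :: "('a \<times> 'a) set \<Rightarrow> ('a \<times> 'a) set" where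
  "eqv R = (R \<union> R\<inverse>)\<^sup>*"
definition cls :: "('a \<times> 'a) set \<Rightarrow> 'a \<Rightarrow> 'a set" where
  "cls R x = {y. (x, y) \<in> eqv R}"
definition nc :: "'a set \<Rightarrow> ('a \<times> 'a) set \<Rightarrow> nat" where
  "nc A R = card (cls R ` A)"
definition gr :: "'a set \<Rightarrow> ('a \<Rightarrow> 'a) \<Rightarrow> ('a \<times> 'a) set" where
  "gr A p = (\<lambda>z. (z, p z)) ` A"

lemma eqv_refl[simp]: "(x, x) \<in> eqv R"
  by (simp add: eqv_def)

lemma eqv_incl: "(x, y) \<in> R \<Longrightarrow> (x, y) \<in> eqv R"
  by (auto simp: eqv_def)

lemma eqv_sym: "(x, y) \<in> eqv R \<Longrightarrow> (y, x) \<in> eqv R"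
proof -
  assume "(x, y) \<in> eqv R"
  hence "(y, x) \<in> ((R \<union> R\<inverse>)\<inverse>)\<^sup>*" unfolding eqv_def by (simp add: rtrancl_converseI)
  moreover have "(R \<union> R\<inverse>)\<inverse> = R \<union> R\<inverse>" by auto
  ultimately show ?thesis unfolding eqv_def by simp
qed

lemma eqv_trans: "(x, y) \<in> eqv R \<Longrightarrow> (y, z) \<in> eqv R \<Longrightarrow> (x, z) \<in> eqv R"
  unfolding eqv_def by (rule rtrancl_trans)

lemma eqv_mono: assumes "R1 \<subseteq> eqv R2" shows "eqv R1 \<subseteq> eqv R2"
proof -
  have "R1 \<union> R1\<inverse> \<subseteq> (R2 \<union> R2\<inverse>)\<^sup>*"
  proof
    fix p assume "p \<in> R1 \<union> R1\<inverse>"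
    then obtain a b where p: "p = (a, b)" "(a, b) \<in> R1 \<or> (b, a) \<in> R1" by (cases p) auto
    hence "(a, b) \<in> eqv R2" using p(2) assms eqv_sym[of b a R2] by auto
    thus "p \<in> (R2 \<union> R2\<inverse>)\<^sup>*" using p unfolding eqv_def by simp
  qed
  thus ?thesis unfolding eqv_def by (rule rtrancl_subset_rtrancl)
qed

lemma cls_eq_iff: "cls R x = cls R y \<longleftrightarrow> (x, y) \<in> eqv R"
proof
  assume "cls R x = cls R y"
  hence "y \<in> cls R x" unfolding cls_def by (metis eqv_refl mem_Collect_eq)
  thus "(x, y) \<in> eqv R" unfolding cls_def by simp
next
  assume a: "(x, y) \<in> eqv R"
  show "cls R x = cls R y"
    unfolding cls_def using eqv_trans[OF a] eqv_trans[OF eqv_sym[OF a]] by auto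
qed

lemma nc_mono:
  assumes "finite A" "R1 \<subseteq> eqv R2"
  shows "nc A R2 \<le> nc A R1"
proof -
  let ?F = "\<lambda>C. \<Union> (cls R2 ` C)"
  have "cls R2 ` A = ?F ` (cls R1 ` A)"
  proof -
    have "?F (cls R1 x) = cls R2 x" for x
    proof
      show "?F (cls R1 x) \<subseteq> cls R2 x"
      proof
        fix z assume "z \<in> ?F (cls R1 x)"
        then obtain y where "(x,y) \<in> eqv R1" "(y, z) \<in> eqv R2" unfolding cls_def by auto
        thus "z \<in> cls R2 x" using eqv_mono[OF assms(2)] eqv_trans[of x y R2 z] unfolding cls_def by auto
      qed
      show "cls R2 x \<subseteq> ?F (cls R1 x)" using eqv_refl[of x R1] unfolding cls_def by blast
    qed
    thus ?thesis by (simp add: image_image)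
  qed
  hence "nc A R2 = card (?F ` (cls R1 ` A))" unfolding nc_def by simp
  also have "\<dots> \<le> card (cls R1 ` A)" using assms(1) by (intro card_image_le) auto
  finally show ?thesis unfolding nc_def .
qed

lemma eqv_insert_cases:
  assumes "(z, w) \<in> eqv (insert (u, x) R)"
  shows "(z, w) \<in> eqv R \<or> (((z, u) \<in> eqv R \<or> (z, x) \<in> eqv R) \<and> ((w, u) \<in> eqv R \<or> (w, x) \<in> eqv R))"
  using assms unfolding eqv_def[of "insert (u, x) R"]
proof (induction rule: rtrancl_induct)
  case base then show ?case by simp
next
  case (step y w)
  from step(2) have "(y, w) \<in> R \<or> (w, y) \<in> R \<or> (y, w) = (u, x) \<or> (y, w) = (x, u)" by auto
  hence e: "(y, w) \<in> eqv R \<or> (y = u \<and> w = x) \<or> (y = x \<and> w = u)"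
    using eqv_incl[of y w R] eqv_incl[of w y R] eqv_sym[of w y R] by auto
  have ih: "(z, y) \<in> eqv R \<or> ((z, u) \<in> eqv R \<or> (z, x) \<in> eqv R) \<and> ((y, u) \<in> eqv R \<or> (y, x) \<in> eqv R)"
    using step(3) .
  from e show ?case
  proof (elim disjE)
    assume a: "(y, w) \<in> eqv R"
    from ih show ?thesis
    proof
      assume "(z, y) \<in> eqv R" thus ?thesis using eqv_trans[OF _ a] by simp
    next
      assume b: "((z, u) \<in> eqv R \<or> (z, x) \<in> eqv R) \<and> ((y, u) \<in> eqv R \<or> (y, x) \<in> eqv R)"
      have wy: "(w, y) \<in> eqv R" using eqv_sym[OF a] .
      show ?thesis using b eqv_trans[OF wy, of u] eqv_trans[OF wy, of x] by blast
    qed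
  next
    assume "y = u \<and> w = x" thus ?thesis using ih by auto
  next
    assume "y = x \<and> w = u" thus ?thesis using ih by auto
  qed
qed

lemma nc_insert_ge:
  assumes "finite A"
  shows "nc A R \<le> nc A (insert (u, x) R) + 1"
proof -
  let ?R' = "insert (u, x) R"
  let ?F = "\<lambda>C. \<Union> (cls ?R' ` C)"
  let ?S = "cls R ` A"
  have RR: "R \<subseteq> eqv ?R'" using eqv_incl[of _ _ "?R'"] by auto
  have Fc: "?F (cls R z) = cls ?R' z" for z
  proof
    show "?F (cls R z) \<subseteq> cls ?R' z"
      using eqv_mono[OF RR] eqv_trans[of z _ ?R'] unfolding cls_def by auto
    show "cls ?R' z \<subseteq> ?F (cls R z)" using eqv_refl[of z R] unfolding cls_def by blast
  qed
  have inj: "inj_on ?F (?S - {cls R u})"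
  proof (rule inj_onI)
    fix C1 C2 assume C1: "C1 \<in> ?S - {cls R u}" and C2: "C2 \<in> ?S - {cls R u}" and eq: "?F C1 = ?F C2"
    from C1 obtain z where z: "C1 = cls R z" by auto
    from C2 obtain w where w: "C2 = cls R w" by auto
    have "(z, w) \<in> eqv ?R'" using eq z w Fc cls_eq_iff by metis
    from eqv_insert_cases[OF this]
    have "(z, w) \<in> eqv R \<or> (((z, u) \<in> eqv R \<or> (z, x) \<in> eqv R) \<and> ((w, u) \<in> eqv R \<or> (w, x) \<in> eqv R))" .
    moreover have "(z, u) \<notin> eqv R" using C1 z cls_eq_iff[of R z u] by auto
    moreover have "(w, u) \<notin> eqv R" using C2 w cls_eq_iff[of R w u] by auto
    ultimately have "(z, x) \<in> eqv R \<and> (w, x) \<in> eqv R \<or> (z, w) \<in> eqv R" by blast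
    hence "(z, w) \<in> eqv R" using eqv_trans[OF _ eqv_sym, of z x R w] by blast
    thus "C1 = C2" using z w cls_eq_iff[of R z w] by simp
  qed
  have "card ?S \<le> card (?S - {cls R u}) + 1"
  proof (cases "cls R u \<in> ?S")
    case True thus ?thesis using assms by (simp add: card_Diff_singleton_if)
  next
    case False thus ?thesis by simp
  qed
  also have "card (?S - {cls R u}) = card (?F ` (?S - {cls R u}))" using inj by (simp add: card_image)
  also have "?F ` (?S - {cls R u}) \<subseteq> cls ?R' ` A" using Fc by auto
  hence "card (?F ` (?S - {cls R u})) \<le> nc A ?R'" unfolding nc_def using assms by (intro card_mono) auto
  finally show ?thesis unfolding nc_def by simp
qed

lemma nc_insert_less:
  assumes "finite A" "u \<in> A" "x \<in> A" "(u, x) \<notin> eqv R"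
  shows "nc A (insert (u, x) R) + 1 \<le> nc A R"
proof -
  let ?R' = "insert (u, x) R"
  let ?F = "\<lambda>C. \<Union> (cls ?R' ` C)"
  let ?S = "cls R ` A"
  have RR: "R \<subseteq> eqv ?R'" using eqv_incl[of _ _ "?R'"] by auto
  have Fc: "?F (cls R z) = cls ?R' z" for z
  proof
    show "?F (cls R z) \<subseteq> cls ?R' z"
      using eqv_mono[OF RR] eqv_trans[of z _ ?R'] unfolding cls_def by auto
    show "cls ?R' z \<subseteq> ?F (cls R z)" using eqv_refl[of z R] unfolding cls_def by blast
  qed
  have img: "cls ?R' ` A = ?F ` ?S" using Fc by (simp add: image_image)
  have ne: "cls R x \<noteq> cls R u" using assms(4) cls_eq_iff eqv_sym by metis
  have "(u, x) \<in> eqv ?R'" by (simp add: eqv_incl)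
  hence "?F (cls R u) = ?F (cls R x)" using Fc cls_eq_iff by metis
  hence Fux: "?F (cls R u) = ?F (cls R x)" .
  have "?F ` ?S = ?F ` (?S - {cls R u})"
  proof
    show "?F ` ?S \<subseteq> ?F ` (?S - {cls R u})"
    proof
      fix C assume "C \<in> ?F ` ?S"
      then obtain D where D: "D \<in> ?S" "C = ?F D" by blast
      show "C \<in> ?F ` (?S - {cls R u})"
      proof (cases "D = cls R u")
        case True
        hence "C = ?F (cls R x)" using D Fux by simp
        moreover have "cls R x \<in> ?S - {cls R u}" using assms(3) ne by blast
        ultimately show ?thesis by blast
      next
        case False thus ?thesis using D by blast
      qed
    qed
  qed blast
  hence "nc A ?R' \<le> card (?S - {cls R u})" unfolding nc_def img
    using assms(1) by (simp add: card_image_le)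
  moreover have "card (?S - {cls R u}) + 1 = card ?S"
  proof -
    have "cls R u \<in> ?S" using assms(2) by blast
    moreover have "finite ?S" using assms(1) by blast
    ultimately show ?thesis using card_Diff_singleton_if card_gt_0_iff by (metis Suc_eq_plus1 Suc_pred' emptyE)
  qed
  ultimately show ?thesis unfolding nc_def by simp
qed

lemma cls_closed_sub:
  assumes "\<forall>(a, b) \<in> R. a \<in> C \<longleftrightarrow> b \<in> C" "a \<in> C"
  shows "cls R a \<subseteq> C"
proof
  fix y assume "y \<in> cls R a"
  hence "(a, y) \<in> (R \<union> R\<inverse>)\<^sup>*" unfolding cls_def eqv_def by simp
  thus "y \<in> C" using assms(2)
  proof (induction rule: rtrancl_induct)
    case base thus ?case .
  next
    case (step y z)
    have "y \<in> C" using step(3,4) .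
    from step(2) have "(y, z) \<in> R \<or> (z, y) \<in> R" by auto
    thus ?case
    proof
      assume "(y, z) \<in> R" thus ?thesis using assms(1) \<open>y \<in> C\<close> by fast
    next
      assume "(z, y) \<in> R" thus ?thesis using assms(1) \<open>y \<in> C\<close> by fast
    qed
  qed
qed

lemma nc_family:
  assumes "finite A" "\<And>C. C \<in> \<F> \<Longrightarrow> C \<subseteq> A \<and> C \<noteq> {} \<and> (\<forall>(a, b) \<in> R. a \<in> C \<longleftrightarrow> b \<in> C)"
    and "\<And>C1 C2. C1 \<in> \<F> \<Longrightarrow> C2 \<in> \<F> \<Longrightarrow> C1 \<noteq> C2 \<Longrightarrow> C1 \<inter> C2 = {}"
  shows "card \<F> \<le> nc A R"
proof -
  define pk where "pk C = (SOME a. a \<in> C)" for C :: "'a set"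
  let ?h = "\<lambda>C. cls R (pk C)"
  have sm: "pk C \<in> C" if "C \<in> \<F>" for C
  proof -
    have "C \<noteq> {}" using assms(2)[OF that] by blast
    thus ?thesis unfolding pk_def by (simp add: some_in_eq)
  qed
  have sub: "?h C \<subseteq> C" if "C \<in> \<F>" for C
  proof -
    have "\<forall>(a, b) \<in> R. a \<in> C \<longleftrightarrow> b \<in> C" using assms(2)[OF that] by blast
    from cls_closed_sub[OF this sm[OF that]] show ?thesis .
  qed
  have inj: "inj_on ?h \<F>"
  proof (rule inj_onI)
    fix C1 C2 assume a: "C1 \<in> \<F>" "C2 \<in> \<F>" "?h C1 = ?h C2"
    have "pk C2 \<in> ?h C2" unfolding cls_def by simp
    hence "pk C2 \<in> ?h C1" using a(3) by simp
    hence "pk C2 \<in> C1" using sub[OF a(1)] by blast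
    hence "C1 \<inter> C2 \<noteq> {}" using sm[OF a(2)] by blast
    thus "C1 = C2" using assms(3)[OF a(1,2)] by blast
  qed
  have "?h ` \<F> \<subseteq> cls R ` A"
  proof
    fix D assume "D \<in> ?h ` \<F>"
    then obtain C where C: "C \<in> \<F>" "D = ?h C" by blast
    have "pk C \<in> A" using sm[OF C(1)] assms(2)[OF C(1)] by blast
    thus "D \<in> cls R ` A" using C(2) by blast
  qed
  moreover have "finite (cls R ` A)" using assms(1) by blast
  ultimately have "card (?h ` \<F>) \<le> card (cls R ` A)" by (rule card_mono[rotated])
  thus ?thesis unfolding nc_def using card_image[OF inj] by simp
qed



lemma perm_period:
  assumes "finite A" "p permutes A"
  obtains n where "n > 0" "(p ^^ n) x = x"
proof -
  have "permutation p" using permutes_imp_permutation[OF assms] .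
  from permutation_self[OF this, of x] that show thesis by blast
qed

lemma eqv_subset: "R1 \<subseteq> R2 \<Longrightarrow> eqv R1 \<subseteq> eqv R2"
proof -
  assume "R1 \<subseteq> R2"
  hence "R1 \<subseteq> eqv R2" using eqv_incl[of _ _ R2] by auto
  thus ?thesis by (rule eqv_mono)
qed

lemma gr_mem: "z \<in> A \<Longrightarrow> (z, p z) \<in> gr A p"
  unfolding gr_def by blast

lemma iter_eqv:
  assumes "p permutes A" "x \<in> A"
  shows "(x, (p ^^ j) x) \<in> eqv (gr A p)"
proof (induction j)
  case 0 show ?case by simp
next
  case (Suc j)
  have "(p ^^ j) x \<in> A" using permutes_in_funpow_image[OF assms] .
  hence "((p ^^ j) x, p ((p ^^ j) x)) \<in> eqv (gr A p)" by (intro eqv_incl gr_mem)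
  hence "((p ^^ j) x, (p ^^ Suc j) x) \<in> eqv (gr A p)" by simp
  thus ?case using eqv_trans[OF Suc.IH] by blast
qed

lemma GT1:
  assumes "p permutes A" "u \<in> A" "x \<in> A"
  shows "gr A (p \<circ> Transposition.transpose u x) \<subseteq> eqv (insert (u, x) (gr A p))"
proof
  fix e assume "e \<in> gr A (p \<circ> Transposition.transpose u x)"
  then obtain z where z: "z \<in> A" "e = (z, p (Transposition.transpose u x z))" unfolding gr_def by auto
  define R where "R = insert (u, x) (gr A p)"
  have ux: "(u, x) \<in> eqv R" unfolding R_def by (rule eqv_incl) simp
  have g: "(w, p w) \<in> eqv R" if "w \<in> A" for w
  proof -
    have "(w, p w) \<in> R" unfolding R_def using gr_mem[OF that] by (rule insertI2)
    thus ?thesis by (rule eqv_incl)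
  qed
  have "e \<in> eqv R"
  proof (cases "z = u")
    case True
    hence "e = (u, p x)" using z by simp
    thus ?thesis using eqv_trans[OF ux g[OF assms(3)]] by simp
  next
    case False note zu = this
    show ?thesis
    proof (cases "z = x")
      case True
      hence "e = (x, p u)" using z zu by simp
      thus ?thesis using eqv_trans[OF eqv_sym[OF ux] g[OF assms(2)]] by simp
    next
      case False
      hence "e = (z, p z)" using z zu by simp
      thus ?thesis using g[OF z(1)] by simp
    qed
  qed
  thus "e \<in> eqv (insert (u, x) (gr A p))" unfolding R_def .
qed

lemma fixed_cls:
  assumes "p permutes A" "p x = x" "(x, y) \<in> eqv (gr A p)"
  shows "y = x"
  using assms(3) unfolding eqv_def
proof (induction rule: rtrancl_induct)
  case base show ?case by simp
next
  case (step y z)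
  have "(x, z) \<in> gr A p \<or> (z, x) \<in> gr A p" using step by auto
  thus ?case
  proof
    assume "(x, z) \<in> gr A p" thus ?thesis using assms(2) unfolding gr_def by auto
  next
    assume "(z, x) \<in> gr A p"
    hence "p z = p x" using assms(2) unfolding gr_def by auto
    thus ?thesis using permutes_inj[OF assms(1)] by (simp add: inj_eq)
  qed
qed

lemma GT2:
  assumes "finite A" "p permutes A" "u \<in> A" "x \<in> A" "(u, x) \<notin> eqv (gr A p)"
  shows "(u, x) \<in> eqv (gr A (p \<circ> Transposition.transpose u x))"
proof -
  define q where "q = p \<circ> Transposition.transpose u x"
  have ux: "u \<noteq> x" using assms(5) by auto
  have qu: "q u = p x" unfolding q_def by simp
  have qy: "y \<noteq> u \<Longrightarrow> y \<noteq> x \<Longrightarrow> q y = p y" for y unfolding q_def by simp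
  have claim: "(u, (p ^^ Suc j) x) \<in> eqv (gr A q) \<or> (u, x) \<in> eqv (gr A q)" for j
  proof (induction j)
    case 0
    have "(u, q u) \<in> gr A q" using gr_mem[OF assms(3)] .
    hence a: "(u, q u) \<in> eqv (gr A q)" by (rule eqv_incl)
    have "(p ^^ Suc 0) x = q u" using qu by simp
    thus ?case using a by (intro disjI1) (simp only:)
  next
    case (Suc j)
    show ?case
    proof (cases "(u, x) \<in> eqv (gr A q)")
      case True thus ?thesis by (rule disjI2)
    next
      case False
      define y where "y = (p ^^ Suc j) x"
      have uy: "(u, y) \<in> eqv (gr A q)" using Suc.IH False unfolding y_def by blast
      have yA: "y \<in> A" unfolding y_def using permutes_in_funpow_image[OF assms(2,4)] .
      show ?thesis
      proof (cases "y = x")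
        case True thus ?thesis using uy by (intro disjI2) simp
      next
        case yx: False
        have "y \<noteq> u"
        proof
          assume "y = u"
          hence xu: "(x, u) \<in> eqv (gr A p)" using iter_eqv[OF assms(2,4), of "Suc j"] unfolding y_def by simp
          show False using assms(5) eqv_sym[OF xu] by simp
        qed
        hence "q y = (p ^^ Suc (Suc j)) x" using yx qy unfolding y_def by simp
        moreover have "(y, q y) \<in> gr A q" using gr_mem[OF yA] .
        ultimately have "(y, (p ^^ Suc (Suc j)) x) \<in> eqv (gr A q)" using eqv_incl[of y "q y" "gr A q"] by simp
        thus ?thesis using eqv_trans[OF uy] by (intro disjI1) blast
      qed
    qed
  qed
  obtain n where n: "n > 0" "(p ^^ n) x = x" using perm_period[OF assms(1,2)] by blast
  then obtain j where "n = Suc j" using gr0_implies_Suc by blast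
  hence "(u, x) \<in> eqv (gr A q)" using claim[of j] n by auto
  thus ?thesis unfolding q_def .
qed

lemma comp_twice: "(p \<circ> Transposition.transpose u x) \<circ> Transposition.transpose u x = p"
  by (simp add: o_assoc[symmetric])

lemma sub_eqv: "R1 \<subseteq> R2 \<Longrightarrow> R1 \<subseteq> eqv R2"
proof
  fix e assume "R1 \<subseteq> R2" "e \<in> R1"
  hence "e \<in> R2" by blast
  thus "e \<in> eqv R2" by (cases e) (simp add: eqv_incl)
qed

lemma F1:
  assumes "finite A" "p permutes A" "u \<in> A" "x \<in> A"
  shows "nc A (gr A (p \<circ> Transposition.transpose u x)) \<le> nc A (gr A p) + 1"
proof -
  define q where "q = p \<circ> Transposition.transpose u x"
  have qp: "q permutes A" unfolding q_def using permutes_compose[OF permutes_swap_id[OF assms(3,4)] assms(2)] .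
  have "gr A (q \<circ> Transposition.transpose u x) \<subseteq> eqv (insert (u, x) (gr A q))" by (rule GT1[OF qp assms(3,4)])
  moreover have "q \<circ> Transposition.transpose u x = p" unfolding q_def by (rule comp_twice)
  ultimately have "gr A p \<subseteq> eqv (insert (u, x) (gr A q))" by simp
  hence "nc A (insert (u, x) (gr A q)) \<le> nc A (gr A p)" by (rule nc_mono[OF assms(1)])
  moreover have "nc A (gr A q) \<le> nc A (insert (u, x) (gr A q)) + 1" by (rule nc_insert_ge[OF assms(1)])
  ultimately show ?thesis unfolding q_def by simp
qed

lemma F2:
  assumes "finite A" "p permutes A" "u \<in> A" "x \<in> A" "(u, x) \<notin> eqv (gr A p)"
  shows "nc A (gr A (p \<circ> Transposition.transpose u x)) + 1 \<le> nc A (gr A p)"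
proof -
  define q where "q = p \<circ> Transposition.transpose u x"
  have qp: "q permutes A" unfolding q_def using permutes_compose[OF permutes_swap_id[OF assms(3,4)] assms(2)] .
  have "gr A (q \<circ> Transposition.transpose u x) \<subseteq> eqv (insert (u, x) (gr A q))" by (rule GT1[OF qp assms(3,4)])
  moreover have "q \<circ> Transposition.transpose u x = p" unfolding q_def by (rule comp_twice)
  ultimately have a: "gr A p \<subseteq> eqv (insert (u, x) (gr A q))" by simp
  have g2: "(u, x) \<in> eqv (gr A q)" unfolding q_def by (rule GT2[OF assms])
  have "gr A q \<subseteq> eqv (gr A q)" by (rule sub_eqv) simp
  hence "insert (u, x) (gr A q) \<subseteq> eqv (gr A q)" using g2 by simp
  hence "eqv (insert (u, x) (gr A q)) \<subseteq> eqv (gr A q)" by (rule eqv_mono)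
  hence "insert (u, x) (gr A p) \<subseteq> eqv (gr A q)" using a g2 by simp
  hence "nc A (gr A q) \<le> nc A (insert (u, x) (gr A p))" by (rule nc_mono[OF assms(1)])
  moreover have "nc A (insert (u, x) (gr A p)) + 1 \<le> nc A (gr A p)" by (rule nc_insert_less[OF assms(1,3,4,5)])
  ultimately show ?thesis unfolding q_def by simp
qed

lemma comp_gr:
  assumes "r permutes A"
  shows "gr A (p \<circ> r) \<subseteq> eqv (gr A p \<union> gr A r)"
proof
  fix e assume "e \<in> gr A (p \<circ> r)"
  then obtain z where z: "z \<in> A" "e = (z, p (r z))" unfolding gr_def by auto
  have rz: "r z \<in> A" using permutes_in_image[OF assms] z(1) by simp
  have "(z, r z) \<in> gr A p \<union> gr A r" using gr_mem[OF z(1), of r] by (rule UnI2)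
  hence 1: "(z, r z) \<in> eqv (gr A p \<union> gr A r)" by (rule eqv_incl)
  have "(r z, p (r z)) \<in> gr A p \<union> gr A r" using gr_mem[OF rz, of p] by (rule UnI1)
  hence 2: "(r z, p (r z)) \<in> eqv (gr A p \<union> gr A r)" by (rule eqv_incl)
  show "e \<in> eqv (gr A p \<union> gr A r)" using z(2) eqv_trans[OF 1 2] by simp
qed

lemma base_case:
  assumes "finite A" "r permutes A" "\<forall>z \<in> A. r z = z"
  shows "nc A (gr A r) = card A" "gr A (p \<circ> r) = gr A p" "nc A (gr A p \<union> gr A r) = nc A (gr A p)"
proof -
  have "cls (gr A r) z = {z}" if "z \<in> A" for z
  proof -
    have "y = z" if "(z, y) \<in> eqv (gr A r)" for y using fixed_cls[OF assms(2) _ that] assms(3) \<open>z \<in> A\<close> by simp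
    thus ?thesis unfolding cls_def by auto
  qed
  hence "cls (gr A r) ` A = (\<lambda>z. {z}) ` A" by auto
  thus "nc A (gr A r) = card A" unfolding nc_def by (simp add: card_image)
  show "gr A (p \<circ> r) = gr A p" unfolding gr_def using assms(3) by auto
  have "gr A p \<subseteq> eqv (gr A p \<union> gr A r)" by (rule sub_eqv) simp
  hence 1: "nc A (gr A p \<union> gr A r) \<le> nc A (gr A p)" by (rule nc_mono[OF assms(1)])
  have "gr A r \<subseteq> eqv (gr A p)"
  proof
    fix e assume "e \<in> gr A r"
    then obtain z where "z \<in> A" "e = (z, z)" unfolding gr_def using assms(3) by auto
    thus "e \<in> eqv (gr A p)" by simp
  qed
  moreover have "gr A p \<subseteq> eqv (gr A p)" by (rule sub_eqv) simp
  ultimately have "gr A p \<union> gr A r \<subseteq> eqv (gr A p)" by simp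
  hence "nc A (gr A p) \<le> nc A (gr A p \<union> gr A r)" by (rule nc_mono[OF assms(1)])
  thus "nc A (gr A p \<union> gr A r) = nc A (gr A p)" using 1 by simp
qed

theorem perm_genus:
  assumes "finite A" "p permutes A" "r permutes A"
  shows "nc A (gr A p) + nc A (gr A r) + nc A (gr A (p \<circ> r)) \<le> card A + 2 * nc A (gr A p \<union> gr A r)"
  using assms(3)
proof (induction "card {z \<in> A. r z \<noteq> z}" arbitrary: r rule: less_induct)
  case less
  show ?case
  proof (cases "\<forall>z \<in> A. r z = z")
    case True
    note b = base_case(1)[OF assms(1) less.prems True] base_case(2)[where p=p, OF assms(1) less.prems True]
       base_case(3)[where p=p, OF assms(1) less.prems True]
    show ?thesis unfolding b by simp
  next
    case False
    then obtain x where x: "x \<in> A" "r x \<noteq> x" by blast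
    define u where "u = inv r x"
    have rux: "r u = x" unfolding u_def using permutes_inverses(1)[OF less.prems] .
    have uA: "u \<in> A" unfolding u_def using permutes_in_image[OF permutes_inv[OF less.prems]] x(1) by simp
    have ux: "u \<noteq> x" using rux x(2) by auto
    define t where "t = Transposition.transpose u x"
    define r' where "r' = r \<circ> t"
    have r'p: "r' permutes A" unfolding r'_def t_def using permutes_compose[OF permutes_swap_id[OF uA x(1)] less.prems] .
    have r'x: "r' x = x" unfolding r'_def t_def using rux by simp
    have r'z: "r' z = r z" if "z \<noteq> u" "z \<noteq> x" for z unfolding r'_def t_def using that by simp
    have sub: "{z \<in> A. r' z \<noteq> z} \<subseteq> {z \<in> A. r z \<noteq> z} - {x}"
    proof
      fix z assume z: "z \<in> {z \<in> A. r' z \<noteq> z}"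
      have "z \<noteq> x" using z r'x by auto
      moreover have "r z \<noteq> z"
      proof (cases "z = u")
        case True thus ?thesis using rux ux by simp
      next
        case False thus ?thesis using z r'z \<open>z \<noteq> x\<close> by auto
      qed
      ultimately show "z \<in> {z \<in> A. r z \<noteq> z} - {x}" using z by auto
    qed
    have "card {z \<in> A. r' z \<noteq> z} < card {z \<in> A. r z \<noteq> z}"
    proof -
      have fin: "finite {z \<in> A. r z \<noteq> z}" using assms(1) by simp
      have "card ({z \<in> A. r z \<noteq> z} - {x}) < card {z \<in> A. r z \<noteq> z}"
        using x fin by (intro card_Diff1_less) auto
      thus ?thesis using card_mono[OF _ sub] fin by (meson finite_Diff le_less_trans)
    qed
    note IH = less.hyps[OF this r'p]
    have rr: "r = r' \<circ> t" unfolding r'_def t_def by (simp add: o_assoc[symmetric])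
    have prr: "p \<circ> r = (p \<circ> r') \<circ> t" unfolding rr by (simp add: o_assoc)
    have not_r': "(u, x) \<notin> eqv (gr A r')"
    proof
      assume ux': "(u, x) \<in> eqv (gr A r')"
      have "u = x" using fixed_cls[OF r'p r'x eqv_sym[OF ux']] by simp
      thus False using ux by simp
    qed
    have cr: "nc A (gr A r) + 1 \<le> nc A (gr A r')"
      using F2[OF assms(1) r'p uA x(1) not_r'] unfolding rr t_def .
    have pr'p: "p \<circ> r' permutes A" using permutes_compose[OF r'p assms(2)] .
    have grr: "gr A r \<subseteq> eqv (insert (u, x) (gr A r'))" unfolding rr t_def by (rule GT1[OF r'p uA x(1)])
    show ?thesis
    proof (cases "(u, x) \<in> eqv (gr A (p \<circ> r'))")
      case True
      have c1: "nc A (gr A (p \<circ> r)) \<le> nc A (gr A (p \<circ> r')) + 1"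
        unfolding prr t_def by (rule F1[OF assms(1) pr'p uA x(1)])
      have "(u, x) \<in> eqv (gr A p \<union> gr A r')" using True eqv_mono[OF comp_gr[OF r'p, of p]] by blast
      moreover have "gr A r' \<subseteq> eqv (gr A p \<union> gr A r')" by (rule sub_eqv) blast
      ultimately have "insert (u, x) (gr A r') \<subseteq> eqv (gr A p \<union> gr A r')" by simp
      hence "eqv (insert (u, x) (gr A r')) \<subseteq> eqv (gr A p \<union> gr A r')" by (rule eqv_mono)
      moreover have "gr A p \<subseteq> eqv (gr A p \<union> gr A r')" by (rule sub_eqv) blast
      ultimately have "gr A p \<union> gr A r \<subseteq> eqv (gr A p \<union> gr A r')" using grr by blast
      hence "nc A (gr A p \<union> gr A r') \<le> nc A (gr A p \<union> gr A r)" by (rule nc_mono[OF assms(1)])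
      thus ?thesis using IH c1 cr by simp
    next
      case False
      have c1: "nc A (gr A (p \<circ> r)) + 1 \<le> nc A (gr A (p \<circ> r'))"
        unfolding prr t_def by (rule F2[OF assms(1) pr'p uA x(1) False])
      have ins: "nc A (gr A p \<union> gr A r') \<le> nc A (insert (u, x) (gr A p \<union> gr A r')) + 1"
        by (rule nc_insert_ge[OF assms(1)])
      have "eqv (insert (u, x) (gr A r')) \<subseteq> eqv (insert (u, x) (gr A p \<union> gr A r'))"
        by (rule eqv_subset) blast
      moreover have "gr A p \<subseteq> eqv (insert (u, x) (gr A p \<union> gr A r'))" by (rule sub_eqv) blast
      ultimately have "gr A p \<union> gr A r \<subseteq> eqv (insert (u, x) (gr A p \<union> gr A r'))" using grr by blast
      hence "nc A (insert (u, x) (gr A p \<union> gr A r')) \<le> nc A (gr A p \<union> gr A r)" by (rule nc_mono[OF assms(1)])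
      thus ?thesis using ins IH c1 cr by simp
    qed
  qed
qed



section \<open>Orbits\<close>

lemma orb_self: "x \<in> orb p x"
  unfolding orb_def by (rule range_eqI[of _ _ 0]) simp

lemma orb_step: "y \<in> orb p x \<Longrightarrow> p y \<in> orb p x"
proof -
  assume "y \<in> orb p x"
  then obtain n where "y = (p ^^ n) x" unfolding orb_def by blast
  hence "p y = (p ^^ Suc n) x" by simp
  thus ?thesis unfolding orb_def by (rule range_eqI)
qed

lemma orb_iter: "(p ^^ n) x \<in> orb p x"
  unfolding orb_def by (rule range_eqI) (rule refl)

lemma orb_trans: "y \<in> orb p x \<Longrightarrow> z \<in> orb p y \<Longrightarrow> z \<in> orb p x"
proof -
  assume "y \<in> orb p x" "z \<in> orb p y"
  then obtain n m where "y = (p ^^ n) x" "z = (p ^^ m) y" unfolding orb_def by blast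
  hence "z = (p ^^ (m + n)) x" by (simp add: funpow_add)
  thus ?thesis unfolding orb_def by (rule range_eqI)
qed

lemma orb_back:
  assumes "finite D" "p permutes D" "p y \<in> orb p x"
  shows "y \<in> orb p x"
proof -
  obtain n where n: "n > 0" "(p ^^ n) y = y" using perm_period[OF assms(1,2)] by blast
  then obtain k where k: "n = Suc k" using gr0_implies_Suc by blast
  have "(p ^^ k) (p y) = (p ^^ n) y" unfolding k by (simp only: funpow_Suc_right o_apply)
  hence "y \<in> orb p (p y)" using n(2) orb_iter[of k p "p y"] by simp
  thus ?thesis by (rule orb_trans[OF assms(3)])
qed

lemma orb_sym:
  assumes "finite D" "p permutes D" "y \<in> orb p x"
  shows "x \<in> orb p y"
proof -
  obtain m where m: "y = (p ^^ m) x" using assms(3) unfolding orb_def by blast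
  have "x \<in> orb p ((p ^^ m) x)" for m
  proof (induction m)
    case 0 show ?case by (simp add: orb_self)
  next
    case (Suc m)
    have "(p ^^ m) x \<in> orb p (p ((p ^^ m) x))" using orb_back[OF assms(1,2) orb_self] .
    hence "x \<in> orb p (p ((p ^^ m) x))" using orb_trans[OF _ Suc.IH] by blast
    thus ?case by simp
  qed
  thus ?thesis using m by simp
qed

lemma orb_eq:
  assumes "finite D" "p permutes D" "y \<in> orb p x"
  shows "orb p y = orb p x"
proof
  show "orb p y \<subseteq> orb p x" using orb_trans[OF assms(3)] by blast
  have "x \<in> orb p y" by (rule orb_sym[OF assms])
  thus "orb p x \<subseteq> orb p y" using orb_trans[of x p y] by blast
qed

lemma orb_sub:
  assumes "p permutes D" "x \<in> D"
  shows "orb p x \<subseteq> D"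
  unfolding orb_def using permutes_in_funpow_image[OF assms] by blast

lemma orb_disj:
  assumes "finite D" "p permutes D" "orb p x \<noteq> orb p y"
  shows "orb p x \<inter> orb p y = {}"
proof (rule ccontr)
  assume "orb p x \<inter> orb p y \<noteq> {}"
  then obtain z where z: "z \<in> orb p x" "z \<in> orb p y" by blast
  have "orb p z = orb p x" by (rule orb_eq[OF assms(1,2) z(1)])
  moreover have "orb p z = orb p y" by (rule orb_eq[OF assms(1,2) z(2)])
  ultimately show False using assms(3) by simp
qed

lemma orb_cls:
  assumes "finite D" "p permutes D" "x \<in> D"
  shows "orb p x \<subseteq> cls (gr D p) x"
proof
  fix y assume "y \<in> orb p x"
  then obtain n where "y = (p ^^ n) x" unfolding orb_def by blast
  thus "y \<in> cls (gr D p) x" unfolding cls_def using iter_eqv[OF assms(2,3)] by simp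
qed

lemma darts_mem: "d \<in> darts E \<longleftrightarrow> fst d \<in> E"
  unfolding darts_def by (cases d) auto

lemma alpha_simps[simp]: "fst (alpha d) = fst d" "alpha (alpha d) = d" "alpha d \<noteq> d"
  unfolding alpha_def by (cases d; simp)+

lemma finite_darts: "finite E \<Longrightarrow> finite (darts E)"
  unfolding darts_def by simp

lemma card_darts: "finite E \<Longrightarrow> card (darts E) = 2 * card E"
  unfolding darts_def by (simp add: card_cartesian_product)

lemma alpha_bij: "bij_betw alpha (darts E) (darts E)"
proof (rule bij_betwI[of _ _ _ alpha])
  show "alpha \<in> darts E \<rightarrow> darts E" by (auto simp: Pi_def darts_mem)
  show "alpha \<in> darts E \<rightarrow> darts E" by (auto simp: Pi_def darts_mem)
qed simp_all

definition ph :: "'e set \<Rightarrow> ('e \<times> bool \<Rightarrow> 'e \<times> bool) \<Rightarrow> 'e \<times> bool \<Rightarrow> 'e \<times> bool" where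
  "ph E s = (\<lambda>d. if d \<in> darts E then s (alpha d) else d)"

lemma ph_permutes:
  assumes "s permutes darts E"
  shows "ph E s permutes darts E"
proof (rule bij_imp_permutes)
  have "bij_betw (s \<circ> alpha) (darts E) (darts E)"
    using bij_betw_trans[OF alpha_bij permutes_imp_bij[OF assms]] .
  thus "bij_betw (ph E s) (darts E) (darts E)"
    by (rule bij_betw_cong[THEN iffD1, rotated]) (simp add: ph_def)
next
  fix x assume "x \<notin> darts E" thus "ph E s x = x" unfolding ph_def by simp
qed

lemma orb_phi_ph:
  assumes "s permutes darts E" "d \<in> darts E"
  shows "orb (phi s) d = orb (ph E s) d"
proof -
  have "((phi s) ^^ n) d = ((ph E s) ^^ n) d \<and> ((ph E s) ^^ n) d \<in> darts E" for n
  proof (induction n)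
    case 0 thus ?case using assms(2) by simp
  next
    case (Suc n)
    have "(ph E s) (((ph E s) ^^ n) d) \<in> darts E"
      using permutes_in_image[OF ph_permutes[OF assms(1)]] Suc.IH by simp
    thus ?case using Suc.IH unfolding ph_def phi_def by simp
  qed
  thus ?thesis unfolding orb_def by simp
qed

definition alpha' :: "'e set \<Rightarrow> 'e set \<Rightarrow> 'e \<times> bool \<Rightarrow> 'e \<times> bool" where
  "alpha' E X = (\<lambda>d. if d \<in> darts E \<and> fst d \<notin> X then alpha d else d)"

lemma alpha'_invol: "alpha' E X (alpha' E X d) = d"
  unfolding alpha'_def using darts_mem by (cases "d \<in> darts E \<and> fst d \<notin> X") (auto simp: darts_mem)

lemma alpha'_permutes: "alpha' E X permutes darts E"
proof (rule bij_imp_permutes)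
  show "bij_betw (alpha' E X) (darts E) (darts E)"
  proof (rule bij_betwI[of _ _ _ "alpha' E X"])
    show "alpha' E X \<in> darts E \<rightarrow> darts E" unfolding alpha'_def by (auto simp: darts_mem)
    show "alpha' E X \<in> darts E \<rightarrow> darts E" unfolding alpha'_def by (auto simp: darts_mem)
  qed (simp_all add: alpha'_invol)
next
  fix x assume "x \<notin> darts E" thus "alpha' E X x = x" unfolding alpha'_def by simp
qed



lemma L_V:
  assumes "finite E" "s permutes darts E"
  shows "card (verts E s) \<le> nc (darts E) (gr (darts E) s)"
proof (rule nc_family[OF finite_darts[OF assms(1)]])
  fix C assume "C \<in> verts E s"
  then obtain d where d: "d \<in> darts E" "C = orb s d" unfolding verts_def by blast
  have "C \<subseteq> darts E" using orb_sub[OF assms(2) d(1)] d(2) by simp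
  moreover have "C \<noteq> {}" using orb_self[of d s] d(2) by blast
  moreover have "\<forall>(a, b) \<in> gr (darts E) s. a \<in> C \<longleftrightarrow> b \<in> C"
  proof (clarify)
    fix a b assume "(a, b) \<in> gr (darts E) s"
    hence b: "b = s a" unfolding gr_def by auto
    show "a \<in> C \<longleftrightarrow> b \<in> C"
      using orb_step[of a s d] orb_back[OF finite_darts[OF assms(1)] assms(2), of a d] b d(2) by blast
  qed
  ultimately show "C \<subseteq> darts E \<and> C \<noteq> {} \<and> (\<forall>(a, b) \<in> gr (darts E) s. a \<in> C \<longleftrightarrow> b \<in> C)" by blast
next
  fix C1 C2 assume "C1 \<in> verts E s" "C2 \<in> verts E s" "C1 \<noteq> C2"
  thus "C1 \<inter> C2 = {}" unfolding verts_def using orb_disj[OF finite_darts[OF assms(1)] assms(2)] by blast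
qed

lemma L_F:
  assumes "finite E" "s permutes darts E"
  shows "card (faces E s - (\<lambda>d. orb (phi s) d) ` {d \<in> darts E. fst d \<in> X})
           \<le> nc (darts E) (gr (darts E) (s \<circ> alpha' E X))"
proof (rule nc_family[OF finite_darts[OF assms(1)]])
  let ?D = "darts E"
  let ?T = "(\<lambda>d. orb (phi s) d) ` {d \<in> darts E. fst d \<in> X}"
  let ?P = "ph E s"
  have fD: "finite ?D" using finite_darts[OF assms(1)] .
  have Pp: "?P permutes ?D" using ph_permutes[OF assms(2)] .
  {
    fix C assume "C \<in> faces E s - ?T"
    then obtain d0 where d0: "d0 \<in> ?D" "C = orb (phi s) d0" "C \<notin> ?T" unfolding faces_def by blast
    have CP: "C = orb ?P d0" using orb_phi_ph[OF assms(2) d0(1)] d0(2) by simp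
    have CD: "C \<subseteq> ?D" using orb_sub[OF Pp d0(1)] CP by simp
    have key: "fst b \<notin> X" if "b \<in> C" for b
    proof
      assume "fst b \<in> X"
      moreover have "b \<in> ?D" using that CD by blast
      moreover have "orb (phi s) b = C"
        using orb_phi_ph[OF assms(2), of b] orb_eq[OF fD Pp, of b d0] that CP \<open>b \<in> ?D\<close> by simp
      ultimately have "C \<in> ?T" by blast
      thus False using d0(3) by blast
    qed
    have "\<forall>(a, b) \<in> gr ?D (s \<circ> alpha' E X). a \<in> C \<longleftrightarrow> b \<in> C"
    proof (clarify)
      fix a b assume "(a, b) \<in> gr ?D (s \<circ> alpha' E X)"
      hence ab: "a \<in> ?D" "b = s (alpha' E X a)" unfolding gr_def by auto
      show "a \<in> C \<longleftrightarrow> b \<in> C"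
      proof
        assume "a \<in> C"
        hence "fst a \<notin> X" using key by blast
        hence "b = ?P a" using ab unfolding alpha'_def ph_def by simp
        thus "b \<in> C" using orb_step[of a ?P d0] \<open>a \<in> C\<close> CP by simp
      next
        assume bC: "b \<in> C"
        show "a \<in> C"
        proof (cases "fst a \<in> X")
          case False
          hence "b = ?P a" using ab unfolding alpha'_def ph_def by simp
          thus "a \<in> C" using orb_back[OF fD Pp, of a d0] bC CP by simp
        next
          case True
          hence "b = s a" using ab unfolding alpha'_def by simp
          moreover have "alpha a \<in> ?D" using ab(1) by (simp add: darts_mem)
          ultimately have "?P (alpha a) = b" unfolding ph_def by simp
          hence "alpha a \<in> C" using orb_back[OF fD Pp, of "alpha a" d0] bC CP by simp
          hence "fst (alpha a) \<notin> X" using key by blast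
          thus "a \<in> C" using True by simp
        qed
      qed
    qed
    moreover have "C \<noteq> {}" using orb_self[of d0 ?P] CP by blast
    ultimately show "C \<subseteq> ?D \<and> C \<noteq> {} \<and> (\<forall>(a, b) \<in> gr ?D (s \<circ> alpha' E X). a \<in> C \<longleftrightarrow> b \<in> C)"
      using CD by blast
  }
  {
    fix C1 C2 assume a: "C1 \<in> faces E s - ?T" "C2 \<in> faces E s - ?T" "C1 \<noteq> C2"
    then obtain d1 d2 where "d1 \<in> ?D" "C1 = orb (phi s) d1" "d2 \<in> ?D" "C2 = orb (phi s) d2"
      unfolding faces_def by blast
    hence "C1 = orb ?P d1" "C2 = orb ?P d2" using orb_phi_ph[OF assms(2)] by simp_all
    thus "C1 \<inter> C2 = {}" using orb_disj[OF fD Pp] a(3) by simp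
  }
qed

lemma L_A:
  assumes "finite E" "X \<subseteq> E"
  shows "card (E - X) + 2 * card X \<le> nc (darts E) (gr (darts E) (alpha' E X))"
proof -
  let ?D = "darts E"
  let ?DX = "{d \<in> darts E. fst d \<in> X}"
  let ?F1 = "(\<lambda>d. {d}) ` ?DX"
  let ?F2 = "(\<lambda>e. {(e, True), (e, False)}) ` (E - X)"
  have fD: "finite ?D" using finite_darts[OF assms(1)] .
  have DX: "?DX = X \<times> UNIV" using assms(2) by (auto simp: darts_mem)
  have cDX: "card ?DX = 2 * card X" unfolding DX using assms by (simp add: card_cartesian_product finite_subset)
  have c1: "card ?F1 = card ?DX" by (rule card_image) (auto simp: inj_on_def)
  have c2: "card ?F2 = card (E - X)" by (rule card_image) (auto simp: inj_on_def)
  have disj: "?F1 \<inter> ?F2 = {}"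
  proof (rule ccontr)
    assume "?F1 \<inter> ?F2 \<noteq> {}"
    then obtain d and e :: 'e where "{d} = {(e, True), (e, False)}" by blast
    hence "(e, True) = (e, False)" by (metis singletonD insertI1 insert_commute)
    thus False by simp
  qed
  have fin1: "finite ?F1" using fD by simp
  have fin2: "finite ?F2" using assms(1) by simp
  have "card (?F1 \<union> ?F2) = card (E - X) + 2 * card X"
    using card_Un_disjoint[OF fin1 fin2 disj] c1 c2 cDX by simp
  moreover have "card (?F1 \<union> ?F2) \<le> nc ?D (gr ?D (alpha' E X))"
  proof (rule nc_family[OF fD])
    fix C assume "C \<in> ?F1 \<union> ?F2"
    thus "C \<subseteq> ?D \<and> C \<noteq> {} \<and> (\<forall>(a, b) \<in> gr ?D (alpha' E X). a \<in> C \<longleftrightarrow> b \<in> C)"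
    proof
      assume "C \<in> ?F1"
      then obtain d where d: "d \<in> ?D" "fst d \<in> X" "C = {d}" by blast
      have "\<forall>(a, b) \<in> gr ?D (alpha' E X). a \<in> C \<longleftrightarrow> b \<in> C"
      proof (clarify)
        fix a b assume "(a, b) \<in> gr ?D (alpha' E X)"
        hence ab: "a \<in> ?D" "b = alpha' E X a" unfolding gr_def by auto
        show "a \<in> C \<longleftrightarrow> b \<in> C"
        proof (cases "fst a \<in> X")
          case True thus ?thesis using ab unfolding alpha'_def by simp
        next
          case False
          hence "b = alpha a" using ab unfolding alpha'_def by simp
          moreover have "a \<noteq> d" using False d(2) by blast
          moreover have "alpha a \<noteq> d" using False d(2) by (metis alpha_simps(1))
          ultimately show ?thesis using d(3) by simp
        qed
      qed
      thus ?thesis using d by blast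
    next
      assume "C \<in> ?F2"
      then obtain e where e: "e \<in> E" "e \<notin> X" "C = {(e, True), (e, False)}" by blast
      have "\<forall>(a, b) \<in> gr ?D (alpha' E X). a \<in> C \<longleftrightarrow> b \<in> C"
      proof (clarify)
        fix a b assume "(a, b) \<in> gr ?D (alpha' E X)"
        hence ab: "a \<in> ?D" "b = alpha' E X a" unfolding gr_def by auto
        obtain e' \<beta> where a: "a = (e', \<beta>)" by (cases a)
        show "a \<in> C \<longleftrightarrow> b \<in> C"
        proof (cases "e' \<in> X")
          case True
          hence "b = a" using ab a unfolding alpha'_def by simp
          moreover have "e' \<noteq> e" using True e(2) by blast
          ultimately show ?thesis using e(3) a by simp
        next
          case False
          hence "b = (e', \<not> \<beta>)" using ab a unfolding alpha'_def alpha_def by simp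
          thus ?thesis using e(3) a by (cases \<beta>) auto
        qed
      qed
      moreover have "C \<subseteq> ?D" using e by (auto simp: darts_mem)
      ultimately show ?thesis using e by blast
    qed
  next
    fix C1 C2 assume "C1 \<in> ?F1 \<union> ?F2" "C2 \<in> ?F1 \<union> ?F2" "C1 \<noteq> C2"
    thus "C1 \<inter> C2 = {}" by auto
  qed
  ultimately show ?thesis by simp
qed



definition symd :: "'a set \<Rightarrow> 'a set \<Rightarrow> 'a set" where
  "symd A B = (A - B) \<union> (B - A)"

lemma cutset_symd: "cutset E s (symd W Z) = symd (cutset E s W) (cutset E s Z)"
  unfolding cutset_def symd_def by auto

lemma sum_symd:
  fixes c :: "'a \<Rightarrow> real"
  assumes "finite A" "finite B"
  shows "sum c (symd A B) = sum c A + sum c B - 2 * sum c (A \<inter> B)"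
proof -
  have "sum c (symd A B) = sum c (A - B) + sum c (B - A)"
    unfolding symd_def by (rule sum.union_disjoint) (use assms in auto)
  moreover have "sum c A = sum c (A \<inter> B) + sum c (A - B)" using sum.Int_Diff[OF assms(1)] .
  moreover have "sum c B = sum c (B \<inter> A) + sum c (B - A)" using sum.Int_Diff[OF assms(2)] .
  moreover have "B \<inter> A = A \<inter> B" by blast
  ultimately show ?thesis by simp
qed

lemma exch:
  fixes c :: "'e \<Rightarrow> real"
  assumes "min_S_cut E s c Q S W" "Z \<subseteq> verts E s" "Z \<inter> Q = {}"
  shows "sum c (cutset E s W) \<le> sum c (symd (cutset E s W) (cutset E s Z))"
proof -
  have sep: "S_separating E s Q S W" using assms(1) unfolding min_S_cut_def by blast
  have "S_separating E s Q S (symd W Z)"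
  proof -
    have "symd W Z \<subseteq> verts E s" using sep assms(2) unfolding S_separating_def symd_def by blast
    moreover have "symd W Z \<inter> Q = W \<inter> Q" using assms(3) unfolding symd_def by blast
    ultimately show ?thesis using sep unfolding S_separating_def by simp
  qed
  hence "sum c (cutset E s W) \<le> sum c (cutset E s (symd W Z))"
    using assms(1) unfolding min_S_cut_def by blast
  thus ?thesis unfolding cutset_symd .
qed

lemma cls_closed_R:
  assumes "(a, b) \<in> R"
  shows "a \<in> cls R d \<longleftrightarrow> b \<in> cls R d"
proof -
  have ab: "(a, b) \<in> eqv R" by (rule eqv_incl[OF assms])
  show ?thesis unfolding cls_def using eqv_trans[OF _ ab, of d] eqv_trans[OF _ eqv_sym[OF ab], of d] by blast
qed

lemma L_Q:
  fixes E :: "'e set" and s :: "'e \<times> bool \<Rightarrow> 'e \<times> bool" and c :: "'e \<Rightarrow> real"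
    and Q S T WS WT :: "('e \<times> bool) set set"
  assumes fE: "finite E" and sp: "s permutes darts E" and conn: "connected_map E s"
    and cpos: "\<forall>e \<in> E. c e > 0"
    and dist: "\<forall>A B. A \<subseteq> E \<longrightarrow> B \<subseteq> E \<longrightarrow> A \<noteq> B \<longrightarrow> sum c A \<noteq> sum c B"
    and QV: "Q \<subseteq> verts E s"
    and SQ: "S \<subset> Q" "S \<noteq> {}"
    and mS: "min_S_cut E s c Q S WS" and mT: "min_S_cut E s c Q T WT"
  shows "nc (darts E) (gr (darts E) s \<union> gr (darts E) (alpha' E (cutset E s WS \<union> cutset E s WT))) \<le> card Q"
proof -
  let ?D = "darts E"
  define ES where "ES = cutset E s WS"
  define ET where "ET = cutset E s WT"
  define X where "X = ES \<union> ET"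
  define R where "R = gr ?D s \<union> gr ?D (alpha' E X)"
  have fD: "finite ?D" using finite_darts[OF fE] .
  have ESE: "ES \<subseteq> E" "ET \<subseteq> E" unfolding ES_def ET_def cutset_def by auto
  have fES: "finite ES" "finite ET" using ESE fE finite_subset by auto
  have trm: "\<exists>q \<in> Q. q \<subseteq> cls R d" if dD: "d \<in> ?D" for d
  proof (rule ccontr)
    assume nq: "\<not> (\<exists>q \<in> Q. q \<subseteq> cls R d)"
    let ?C = "cls R d"
    have dC: "d \<in> ?C" unfolding cls_def by simp
    have vtx: "orb s a \<subseteq> ?C \<longleftrightarrow> a \<in> ?C" if aD: "a \<in> ?D" for a
    proof
      assume "orb s a \<subseteq> ?C" thus "a \<in> ?C" using orb_self[of a s] by blast
    next
      assume aC: "a \<in> ?C"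
      have "orb s a \<subseteq> cls (gr ?D s) a" by (rule orb_cls[OF fD sp aD])
      also have "cls (gr ?D s) a \<subseteq> cls R a"
        using eqv_subset[of "gr ?D s" R] unfolding R_def cls_def by blast
      also have "cls R a = ?C" using aC cls_eq_iff[of R d a] unfolding cls_def by simp
      finally show "orb s a \<subseteq> ?C" .
    qed
    define Z where "Z = {v \<in> verts E s. v \<subseteq> ?C}"
    have ZV: "Z \<subseteq> verts E s" unfolding Z_def by blast
    have ZQ: "Z \<inter> Q = {}" using nq unfolding Z_def by blast
    have inZ: "orb s a \<in> Z \<longleftrightarrow> a \<in> ?C" if aD: "a \<in> ?D" for a
    proof -
      have "orb s a \<in> verts E s" unfolding verts_def using aD by blast
      thus ?thesis unfolding Z_def using vtx[OF aD] by blast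
    qed
    define P where "P = cutset E s Z"
    have PX: "P \<subseteq> X"
    proof
      fix e assume eP: "e \<in> P"
      hence eE: "e \<in> E" unfolding P_def cutset_def by blast
      show "e \<in> X"
      proof (rule ccontr)
        assume eX: "e \<notin> X"
        have aD: "(e, True) \<in> ?D" "(e, False) \<in> ?D" using eE by (simp_all add: darts_mem)
        have "alpha' E X (e, True) = (e, False)" using aD eX unfolding alpha'_def alpha_def by simp
        hence "((e, True), (e, False)) \<in> R" unfolding R_def using gr_mem[OF aD(1), of "alpha' E X"] by simp
        hence "(e, True) \<in> ?C \<longleftrightarrow> (e, False) \<in> ?C" by (rule cls_closed_R)
        hence "(orb s (e, True) \<in> Z) = (orb s (e, False) \<in> Z)" using inZ[OF aD(1)] inZ[OF aD(2)] by simp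
        thus False using eP unfolding P_def cutset_def by simp
      qed
    qed
    have "finite X" using fES unfolding X_def by simp
    hence fP: "finite P" using PX by (rule finite_subset[rotated])
    have m1: "sum c ES \<le> sum c (symd ES P)" unfolding ES_def P_def by (rule exch[OF mS ZV ZQ])
    have m2: "sum c ET \<le> sum c (symd ET P)" unfolding ET_def P_def by (rule exch[OF mT ZV ZQ])
    have m1': "sum c ES \<le> sum c ES + sum c P - 2 * sum c (ES \<inter> P)" using m1 sum_symd[OF fES(1) fP, of c] by simp
    have m2': "sum c ET \<le> sum c ET + sum c P - 2 * sum c (ET \<inter> P)" using m2 sum_symd[OF fES(2) fP, of c] by simp
    have Pun: "P = (ES \<inter> P) \<union> (ET \<inter> P)" using PX unfolding X_def by blast
    have sP: "sum c P = sum c (ES \<inter> P) + sum c (ET \<inter> P) - sum c ((ES \<inter> P) \<inter> (ET \<inter> P))"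
      using sum_Un[of "ES \<inter> P" "ET \<inter> P" c] fP Pun by simp
    have PE: "P \<subseteq> E" unfolding P_def cutset_def by blast
    have st0: "0 \<le> sum c ((ES \<inter> P) \<inter> (ET \<inter> P))"
      by (rule sum_nonneg) (use cpos PE in fastforce)
    have eqs: "sum c (symd ES P) = sum c ES" using m1' m2' sP st0 sum_symd[OF fES(1) fP, of c] by linarith
    have "symd ES P \<subseteq> E" "ES \<subseteq> E" using ESE PE unfolding symd_def by auto
    hence "symd ES P = ES" using dist eqs by (meson)
    hence Pempty: "P = {}" unfolding symd_def by blast
    have clos: "\<forall>e \<in> E. (orb s (e, True) \<in> Z) = (orb s (e, False) \<in> Z)"
      using Pempty unfolding P_def cutset_def by blast
    obtain q where qS: "q \<in> S" using SQ(2) by blast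
    have qQ: "q \<in> Q" using qS SQ(1) by blast
    have v0: "orb s d \<in> verts E s" unfolding verts_def using dD by blast
    have v0Z: "orb s d \<in> Z" using inZ[OF dD] dC by simp
    have "(orb s d, q) \<in> (adj E s)\<^sup>*" using conn v0 qQ QV unfolding connected_map_def by blast
    hence "q \<in> Z" using v0Z
    proof (induction rule: rtrancl_induct)
      case base thus ?case .
    next
      case (step u v)
      from step(2) obtain e b where eb: "e \<in> E" "u = orb s (e, b)" "v = orb s (e, \<not> b)"
        unfolding adj_def by blast
      have "u \<in> Z" using step(3,4) .
      thus ?case using clos eb by (cases b) auto
    qed
    thus False using ZQ qQ by blast
  qed
  define h where "h C = (SOME q. q \<in> Q \<and> q \<subseteq> C)" for C
  have hC: "h C \<in> Q \<and> h C \<subseteq> C" if "C \<in> cls R ` ?D" for C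
  proof -
    from that obtain d where "d \<in> ?D" "C = cls R d" by blast
    hence "\<exists>q. q \<in> Q \<and> q \<subseteq> C" using trm by blast
    thus ?thesis unfolding h_def by (rule someI_ex)
  qed
  have inj: "inj_on h (cls R ` ?D)"
  proof (rule inj_onI)
    fix C1 C2 assume a: "C1 \<in> cls R ` ?D" "C2 \<in> cls R ` ?D" "h C1 = h C2"
    obtain d1 d2 where d: "C1 = cls R d1" "C2 = cls R d2" using a(1,2) by blast
    have "h C1 \<in> verts E s" using hC[OF a(1)] QV by blast
    then obtain x where x: "x \<in> ?D" "h C1 = orb s x" unfolding verts_def by blast
    have xh: "x \<in> h C1" using x(2) orb_self[of x s] by simp
    have "x \<in> C1" using xh hC[OF a(1)] by blast
    moreover have "x \<in> C2" using xh a(3) hC[OF a(2)] by blast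
    ultimately have "x \<in> C1" "x \<in> C2" by auto
    hence x1: "(d1, x) \<in> eqv R" and x2: "(d2, x) \<in> eqv R" using d unfolding cls_def by auto
    have "(d1, d2) \<in> eqv R" using eqv_trans[OF x1 eqv_sym[OF x2]] .
    thus "C1 = C2" using d cls_eq_iff[of R d1 d2] by simp
  qed
  have "finite (verts E s)" unfolding verts_def using fD by (rule finite_imageI)
  hence fQ: "finite Q" using QV by (rule finite_subset[rotated])
  have "h ` (cls R ` ?D) \<subseteq> Q" using hC by blast
  hence "card (cls R ` ?D) \<le> card Q" using card_inj_on_le[OF inj _ fQ] by blast
  thus ?thesis unfolding nc_def R_def X_def ES_def ET_def .
qed



lemma card_filter_sum: "finite A \<Longrightarrow> card {x \<in> A. P x} = (\<Sum>x\<in>A. if P x then 1 else 0)"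
  by (simp add: sum.inter_filter[symmetric])

lemma parity:
  assumes fE: "finite E" and sp: "s permutes darts E" and fF: "f \<in> faces E s"
  shows "even (card {d \<in> darts E. fst d \<in> cutset E s W \<and> orb (phi s) d = f})"
proof -
  let ?D = "darts E"
  let ?P = "ph E s"
  have fD: "finite ?D" using finite_darts[OF fE] .
  have Pp: "?P permutes ?D" using ph_permutes[OF sp] .
  obtain d0 where d0: "d0 \<in> ?D" "f = orb (phi s) d0" using fF unfolding faces_def by blast
  have fP: "f = orb ?P d0" using orb_phi_ph[OF sp d0(1)] d0(2) by simp
  have fsub: "f \<subseteq> ?D" using orb_sub[OF Pp d0(1)] fP by simp
  have ff: "finite f" using fsub fD finite_subset by blast
  define B where "B d = (orb s d \<in> W)" for d
  have mem: "orb (phi s) d = f \<longleftrightarrow> d \<in> f" if "d \<in> ?D" for d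
  proof
    assume "orb (phi s) d = f" thus "d \<in> f" using orb_self[of d "phi s"] by simp
  next
    assume "d \<in> f"
    thus "orb (phi s) d = f" using orb_eq[OF fD Pp, of d d0] fP orb_phi_ph[OF sp that] by simp
  qed
  have cut: "fst d \<in> cutset E s W \<longleftrightarrow> B d \<noteq> B (?P d)" if dD: "d \<in> ?D" for d
  proof -
    have aD: "alpha d \<in> ?D" using dD by (simp add: darts_mem)
    have "s (alpha d) \<in> orb s (alpha d)" using orb_step[OF orb_self] .
    hence "orb s (s (alpha d)) = orb s (alpha d)" by (rule orb_eq[OF fD sp])
    hence BP: "B (?P d) = B (alpha d)" unfolding B_def ph_def using dD by simp
    obtain e \<beta> where d: "d = (e, \<beta>)" by (cases d)
    have eE: "e \<in> E" using dD d by (simp add: darts_mem)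
    show ?thesis using BP eE unfolding cutset_def B_def d alpha_def by (cases \<beta>) auto
  qed
  have set_eq: "{d \<in> ?D. fst d \<in> cutset E s W \<and> orb (phi s) d = f} = {d \<in> f. B d \<noteq> B (?P d)}"
    using mem cut fsub by blast
  have img: "?P ` f = f"
  proof
    show "?P ` f \<subseteq> f" using orb_step[of _ ?P d0] fP by blast
    show "f \<subseteq> ?P ` f"
    proof
      fix y assume yf: "y \<in> f"
      have "?P (inv ?P y) = y" by (rule permutes_inverses(1)[OF Pp])
      hence "inv ?P y \<in> f" using orb_back[OF fD Pp, of "inv ?P y" d0] yf fP by simp
      thus "y \<in> ?P ` f" using \<open>?P (inv ?P y) = y\<close> by (metis image_eqI)
    qed
  qed
  have injP: "inj_on ?P f" using permutes_inj[OF Pp] by (rule inj_on_subset) simp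
  define g where "g d = (if B d then 1 else 0 :: nat)" for d
  have reidx: "(\<Sum>d\<in>f. g (?P d)) = (\<Sum>d\<in>f. g d)"
  proof -
    have "(\<Sum>d\<in>f. g d) = (\<Sum>d\<in>?P ` f. g d)" using img by simp
    also have "\<dots> = (\<Sum>d\<in>f. g (?P d))" using sum.reindex[OF injP, of g] by simp
    finally show ?thesis by simp
  qed
  have pt: "(if B d \<noteq> B (?P d) then 1 else 0) + 2 * (if B d \<and> B (?P d) then 1 else 0) = g d + g (?P d)" for d
    unfolding g_def by auto
  have "card {d \<in> f. B d \<noteq> B (?P d)} + 2 * card {d \<in> f. B d \<and> B (?P d)}
        = (\<Sum>d\<in>f. (if B d \<noteq> B (?P d) then 1 else 0) + 2 * (if B d \<and> B (?P d) then 1 else 0))"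
    using card_filter_sum[OF ff] by (simp add: sum.distrib sum_distrib_left)
  also have "\<dots> = (\<Sum>d\<in>f. g d + g (?P d))" using pt by simp
  also have "\<dots> = 2 * (\<Sum>d\<in>f. g d)" using reidx by (simp add: sum.distrib)
  finally have "card {d \<in> f. B d \<noteq> B (?P d)} = 2 * (\<Sum>d\<in>f. g d) - 2 * card {d \<in> f. B d \<and> B (?P d)}"
    by simp
  hence "even (card {d \<in> f. B d \<noteq> B (?P d)})" by simp
  thus ?thesis using set_eq by simp
qed



theorem corollary2p5:
  fixes E :: "'e set" and \<sigma> :: "'e \<times> bool \<Rightarrow> 'e \<times> bool" and c :: "'e \<Rightarrow> real"
    and Q S T WS WT :: "('e \<times> bool) set set"
  assumes "connected_plane_map E \<sigma>"
    and "\<forall>e \<in> E. c e > 0"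
    and "\<forall>A B. A \<subseteq> E \<longrightarrow> B \<subseteq> E \<longrightarrow> A \<noteq> B \<longrightarrow> sum c A \<noteq> sum c B"
    and "Q \<subseteq> verts E \<sigma>"
    and "S \<subset> Q" "S \<noteq> {}" "T \<subset> Q" "T \<noteq> {}"
    and "min_S_cut E \<sigma> c Q S WS" "min_S_cut E \<sigma> c Q T WT"
  shows "card {f \<in> faces E \<sigma>. dual_deg E \<sigma> (cutset E \<sigma> WS \<union> cutset E \<sigma> WT) f > 2}
           \<le> 6 * card Q"
proof -
  let ?D = "darts E"
  have fE: "finite E" and sp: "\<sigma> permutes ?D" and conn: "connected_map E \<sigma>"
    and euler: "int (card (verts E \<sigma>)) - int (card E) + int (card (faces E \<sigma>)) = 2"
    using assms(1) unfolding connected_plane_map_def by auto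
  have fD: "finite ?D" using finite_darts[OF fE] .
  define ES where "ES = cutset E \<sigma> WS"
  define ET where "ET = cutset E \<sigma> WT"
  define X where "X = ES \<union> ET"
  have XE: "X \<subseteq> E" unfolding X_def ES_def ET_def cutset_def by auto
  have fX: "finite X" using XE fE finite_subset by blast
  define DX where "DX = {d \<in> ?D. fst d \<in> X}"
  define g where "g d = orb (phi \<sigma>) d" for d
  define Tch where "Tch = g ` DX"
  define deg where "deg f = card {d \<in> DX. g d = f}" for f
  have deg_eq: "dual_deg E \<sigma> X f = deg f" for f
    unfolding dual_deg_def deg_def DX_def g_def by (rule arg_cong[where f=card]) blast
  have fDX: "finite DX" unfolding DX_def using fD by simp
  have cDX: "card DX = 2 * card X"
  proof -
    have "DX = X \<times> UNIV" unfolding DX_def using XE by (auto simp: darts_mem)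
    thus ?thesis using fX by (simp add: card_cartesian_product)
  qed
  have Tf: "Tch \<subseteq> faces E \<sigma>" unfolding Tch_def g_def DX_def faces_def by blast
  have fF: "finite (faces E \<sigma>)" unfolding faces_def using fD by simp
  have fT: "finite Tch" using Tf fF finite_subset by blast
  have sumdeg: "card DX = (\<Sum>f\<in>Tch. deg f)"
  proof -
    have "card DX = (\<Sum>d\<in>DX. (1::nat))" by simp
    also have "\<dots> = (\<Sum>f\<in>Tch. \<Sum>d\<in>{x \<in> DX. g x = f}. (1::nat))"
      unfolding Tch_def by (rule sum.image_gen[OF fDX])
    also have "\<dots> = (\<Sum>f\<in>Tch. deg f)" unfolding deg_def by simp
    finally show ?thesis .
  qed
  have deg2: "deg f \<ge> 2" if fT': "f \<in> Tch" for f
  proof -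
    obtain d where d: "d \<in> DX" "g d = f" using fT' unfolding Tch_def by blast
    have ffin: "finite {d \<in> DX. g d = f}" using fDX by simp
    hence ge1: "deg f \<ge> 1" unfolding deg_def using d card_0_eq[OF ffin] by fastforce
    have fF': "f \<in> faces E \<sigma>" using fT' Tf by blast
    define FS where "FS = {d \<in> ?D. fst d \<in> ES \<and> orb (phi \<sigma>) d = f}"
    define FT where "FT = {d \<in> ?D. fst d \<in> ET \<and> orb (phi \<sigma>) d = f}"
    have eS: "even (card FS)" unfolding FS_def ES_def by (rule parity[OF fE sp fF'])
    have eT: "even (card FT)" unfolding FT_def ET_def by (rule parity[OF fE sp fF'])
    have un: "{d \<in> DX. g d = f} = FS \<union> FT" unfolding DX_def g_def FS_def FT_def X_def by blast
    have fin: "finite FS" "finite FT" unfolding FS_def FT_def using fD by simp_all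
    have "deg f \<noteq> 1"
    proof
      assume d1: "deg f = 1"
      have "card FS \<le> 1" using card_mono[of "FS \<union> FT" FS] fin d1 un unfolding deg_def by simp
      hence "card FS = 0" using eS by presburger
      hence "FS = {}" using fin by simp
      have "card FT \<le> 1" using card_mono[of "FS \<union> FT" FT] fin d1 un unfolding deg_def by simp
      hence "card FT = 0" using eT by presburger
      hence "FT = {}" using fin by simp
      show False using d1 un \<open>FS = {}\<close> \<open>FT = {}\<close> unfolding deg_def by simp
    qed
    thus ?thesis using ge1 by simp
  qed
  define N3 where "N3 = {f \<in> faces E \<sigma>. deg f > 2}"
  have goal_eq: "{f \<in> faces E \<sigma>. dual_deg E \<sigma> (cutset E \<sigma> WS \<union> cutset E \<sigma> WT) f > 2} = N3"
    unfolding N3_def using deg_eq unfolding X_def ES_def ET_def by simp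
  have N3T: "N3 \<subseteq> Tch"
  proof
    fix f assume "f \<in> N3"
    hence "deg f > 0" unfolding N3_def by simp
    hence "{d \<in> DX. g d = f} \<noteq> {}" unfolding deg_def by (metis card.empty less_irrefl)
    thus "f \<in> Tch" unfolding Tch_def by blast
  qed
  have sum_lb: "2 * card Tch + card N3 \<le> card DX"
  proof -
    have "(\<Sum>f\<in>Tch. 2 + (if f \<in> N3 then 1 else 0)) \<le> (\<Sum>f\<in>Tch. deg f)"
    proof (rule sum_mono)
      fix f assume "f \<in> Tch"
      hence "2 \<le> deg f" by (rule deg2)
      thus "2 + (if f \<in> N3 then 1 else 0) \<le> deg f" unfolding N3_def by auto
    qed
    moreover have "(\<Sum>f\<in>Tch. 2 + (if f \<in> N3 then 1 else (0::nat))) = 2 * card Tch + card N3"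
    proof -
      have "(\<Sum>f\<in>Tch. (if f \<in> N3 then 1 else (0::nat))) = card {f \<in> Tch. f \<in> N3}"
        using card_filter_sum[OF fT, of "\<lambda>f. f \<in> N3"] by simp
      also have "{f \<in> Tch. f \<in> N3} = N3" using N3T by blast
      finally have "(\<Sum>f\<in>Tch. (if f \<in> N3 then 1 else (0::nat))) = card N3" .
      moreover have "(\<Sum>f\<in>Tch. 2 + (if f \<in> N3 then 1 else (0::nat)))
          = (\<Sum>f\<in>Tch. (2::nat)) + (\<Sum>f\<in>Tch. (if f \<in> N3 then 1 else (0::nat)))"
        by (rule sum.distrib)
      ultimately show ?thesis by simp
    qed
    ultimately show ?thesis using sumdeg by simp
  qed
  have fc: "card (faces E \<sigma>) = card Tch + card (faces E \<sigma> - Tch)"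
    using card_Diff_subset[OF fT Tf] card_mono[OF fF Tf] by simp
  have genus: "nc ?D (gr ?D \<sigma>) + nc ?D (gr ?D (alpha' E X)) + nc ?D (gr ?D (\<sigma> \<circ> alpha' E X))
      \<le> card ?D + 2 * nc ?D (gr ?D \<sigma> \<union> gr ?D (alpha' E X))"
    by (rule perm_genus[OF fD sp alpha'_permutes])
  have b1: "card (verts E \<sigma>) \<le> nc ?D (gr ?D \<sigma>)" by (rule L_V[OF fE sp])
  have b2: "card (E - X) + 2 * card X \<le> nc ?D (gr ?D (alpha' E X))" by (rule L_A[OF fE XE])
  have b3: "card (faces E \<sigma> - Tch) \<le> nc ?D (gr ?D (\<sigma> \<circ> alpha' E X))"
    unfolding Tch_def g_def DX_def by (rule L_F[OF fE sp])
  have b4: "nc ?D (gr ?D \<sigma> \<union> gr ?D (alpha' E X)) \<le> card Q"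
    unfolding X_def ES_def ET_def
    by (rule L_Q[OF fE sp conn assms(2) assms(3) assms(4) assms(5) assms(6) assms(9) assms(10)])
  have cD: "card ?D = 2 * card E" by (rule card_darts[OF fE])
  have cEX: "card (E - X) + card X = card E" using card_Diff_subset[OF fX XE] card_mono[OF fE XE] by simp
  have "card N3 \<le> 6 * card Q"
    using genus b1 b2 b3 b4 cD cEX euler fc sum_lb cDX by linarith
  thus ?thesis unfolding goal_eq .
qed


end
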